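(* Assume there is $\alpha_{\min}\in(0,1)$ such that $D_P^{\alpha_{\min}}\in\mathcal{T}(\mathcal{H})$, $D(x)^{\alpha_{\min}}\in\mathcal{T}(\mathcal{H})$ for $P$-almost all $x$, and the Bochner integral $\mathbb{E}\big(D(X)^{\alpha_{\min}}\big)\in\mathcal{T}(\mathcal{H})$ exists. Then $\alpha\mapsto H_\alpha(U)$ and $\alpha\mapsto H_\alpha(Y|X)$ are continuously differentiable on $(\alpha_{\min},1)\cup(1,\infty)$, and $$\lim_{\alpha\to1}H_\alpha(U) = H_U,\qquad \lim_{\alpha\to1}H_\alpha(Y|X)=H_P.$$
   Context: $\mathcal{H}$ is a separable complex Hilbert space, $\mathcal{T}(\mathcal{H})$ the trace-class operators, $\mathcal{S}(\mathcal{H})$ the density operators, $(\mathcal{X},\Sigma)$ a measurable space, $D:\mathcal{X}\to\mathcal{S}(\mathcal{H})$ measurable (trace-norm Borel $\sigma$-algebra), $P$ a probability distribution on $\mathcal{X}$, $X\sim P$, $D_P := \mathbb{E}D(X)$ (Bochner integral). For every $x$ fix a spectral decomposition $D(x)=\sum_{y\in\mathbb{N}}P(y|x)|e_{y|x}\rangle\langle e_{y|x}|$ with $\{e_{y|x}\}_y$ an orthonormal basis, and $D_P=\sum_{y\in\mathbb{N}}U(y)|e_y\rangle\langle e_y|$ with $\{e_y\}$ an orthonormal basis. $H_P := -\mathbb{E}\sum_y P(y|X)\log P(y|X)$, $H_U := -\sum_y U(y)\log U(y)$. For $\alpha\in[\alpha_{\min},1)\cup(1,\infty)$: $H_\alpha(Y|X)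 := \frac{1}{1-\alpha}\log\mathbb{E}\sum_{y}P(y|X)^\alpha = \frac{1}{1-\alpha}\log\mathbb{E}\,\mathrm{tr}(D(X)^\alpha)$ and $H_\alpha(U):=\frac{1}{1-\alpha}\log\sum_y U(y)^\alpha = \frac1{1-\alpha}\log\mathrm{tr}(D_P^\alpha)$. *)

theory Defs
  imports "HOL-Probability.Probability"
begin

text \<open>Spectral-level rendering. The eigenvalues of D(x) are P x y (y :: nat),
 the eigenvalues of D_P are U y. Logarithm: natural log (ln).\<close>

definition Renyi_U :: "(nat \<Rightarrow> real) \<Rightarrow> real \<Rightarrow> real" where
  "Renyi_U U \<alpha> = 1 / (1 - \<alpha>) * ln (\<Sum>y. U y powr \<alpha>)"

definition Renyi_cond :: "'a measure \<Rightarrow> ('a \<Rightarrow> nat \<Rightarrow> real) \<Rightarrow> real \<Rightarrow> real" where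
  "Renyi_cond M P \<alpha> = 1 / (1 - \<alpha>) * ln (\<integral>x. (\<Sum>y. P x y powr \<alpha>) \<partial>M)"

definition Shannon_U :: "(nat \<Rightarrow> real) \<Rightarrow> real" where
  "Shannon_U U = - (\<Sum>y. U y * ln (U y))"

definition Shannon_cond :: "'a measure \<Rightarrow> ('a \<Rightarrow> nat \<Rightarrow> real) \<Rightarrow> real" where
  "Shannon_cond M P = - (\<integral>x. (\<Sum>y. P x y * ln (P x y)) \<partial>M)"

end

theory Submission
  imports Defs "HOL-Probability.Probability"
begin


lemma mvt_bound:
  fixes h h' :: "real \<Rightarrow> real"
  assumes der: "\<And>t. t > a \<Longrightarrow> (h has_real_derivative h' t) (at t)"
    and b: "\<And>t. t > a \<Longrightarrow> \<bar>h' t\<bar> \<le> B" and s: "s > a" and u: "u > a"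
  shows "\<bar>h s - h u\<bar> \<le> B * \<bar>s - u\<bar>"
proof -
  have *: "\<bar>h v - h w\<bar> \<le> B * \<bar>v - w\<bar>" if wv: "w < v" and wa: "w > a" for v w
  proof -
    obtain z where z: "w < z" "z < v" "h v - h w = (v - w) * h' z"
    proof -
      have "\<exists>z. w < z \<and> z < v \<and> h v - h w = (v - w) * h' z"
        by (rule MVT2[OF \<open>w < v\<close>]) (use der wa in force)
      then show ?thesis using that by blast
    qed
    have "\<bar>h v - h w\<bar> = \<bar>v - w\<bar> * \<bar>h' z\<bar>" using z by (simp add: abs_mult)
    also have "\<dots> \<le> \<bar>v - w\<bar> * B" using b[of z] z that by (intro mult_left_mono) auto
    finally show ?thesis by (simp add: mult.commute)
  qed
  show ?thesis
  proof (cases s u rule: linorder_cases)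
    case less
    have "\<bar>h u - h s\<bar> \<le> B * \<bar>u - s\<bar>" using *[OF less s] .
    then show ?thesis by (simp add: abs_minus_commute)
  next
    case greater then show ?thesis using *[OF greater u] by simp
  qed simp
qed

lemma DI:
  fixes N :: "'b measure" and f f' :: "real \<Rightarrow> 'b \<Rightarrow> real" and g :: "'b \<Rightarrow> real"
  assumes x0: "x0 > a"
    and int: "\<And>t. t > a \<Longrightarrow> integrable N (f t)"
    and meas': "f' x0 \<in> borel_measurable N"
    and der: "AE x in N. \<forall>t>a. ((\<lambda>s. f s x) has_real_derivative f' t x) (at t)"
    and bnd: "AE x in N. \<forall>t>a. \<bar>f' t x\<bar> \<le> g x"
    and g: "integrable N g"
  shows "((\<lambda>t. \<integral>x. f t x \<partial>N) has_real_derivative (\<integral>x. f' x0 x \<partial>N)) (at x0)"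
proof -
  have "((\<lambda>t. ((\<integral>x. f t x \<partial>N) - (\<integral>x. f x0 x \<partial>N)) / (t - x0)) \<longlongrightarrow> (\<integral>x. f' x0 x \<partial>N)) (at x0)"
    unfolding tendsto_at_iff_sequentially
  proof (intro allI impI)
    fix X :: "nat \<Rightarrow> real" assume X: "\<forall>i. X i \<in> UNIV - {x0}" "X \<longlonglongrightarrow> x0"
    then have "eventually (\<lambda>i. a < X i) sequentially" using x0 by (simp add: order_tendstoD(1))
    then obtain n0 where n0: "\<And>i. i \<ge> n0 \<Longrightarrow> X i > a" by (auto simp: eventually_sequentially)
    define s where "s i x = (f (X (i + n0)) x - f x0 x) / (X (i+n0) - x0)" for i x
    have lim: "(\<lambda>i. \<integral>x. s i x \<partial>N) \<longlonglongrightarrow> (\<integral>x. f' x0 x \<partial>N)"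
    proof (rule integral_dominated_convergence[where w=g])
      show "f' x0 \<in> borel_measurable N" by fact
      show "s i \<in> borel_measurable N" for i
        using int[of "X (i+n0)"] int[of x0] n0[of "i+n0"] x0 unfolding s_def
        by (intro borel_measurable_divide borel_measurable_diff borel_measurable_const) auto
      show "integrable N g" by fact
      show "AE x in N. (\<lambda>i. s i x) \<longlonglongrightarrow> f' x0 x" using der
      proof eventually_elim
        case (elim x)
        then have "((\<lambda>t. (f t x - f x0 x)/(t - x0)) \<longlongrightarrow> f' x0 x) (at x0)"
          using x0 has_field_derivative_iff[THEN iffD1, of "\<lambda>s. f s x" "f' x0 x" x0 UNIV] by blast
        then have "((\<lambda>t. (f t x - f x0 x)/(t - x0)) \<circ> X) \<longlonglongrightarrow> f' x0 x"
          unfolding tendsto_at_iff_sequentially using X by auto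
        then have "(\<lambda>i. ((\<lambda>t. (f t x - f x0 x)/(t - x0)) \<circ> X) (i + n0)) \<longlonglongrightarrow> f' x0 x"
          by (rule LIMSEQ_ignore_initial_segment)
        then show ?case by (simp add: s_def comp_def)
      qed
      show "AE x in N. norm (s i x) \<le> g x" for i using der bnd
      proof eventually_elim
        case (elim x)
        have "\<bar>f (X (i+n0)) x - f x0 x\<bar> \<le> g x * \<bar>X (i+n0) - x0\<bar>"
          by (rule mvt_bound[where a=a and h'="\<lambda>t. f' t x"]) (use elim n0[of "i+n0"] x0 in auto)
        moreover have "X (i+n0) \<noteq> x0" using X(1) by auto
        ultimately show ?case by (simp add: s_def abs_divide divide_le_eq)
      qed
    qed
    have eq: "((\<lambda>t. ((\<integral>x. f t x \<partial>N) - (\<integral>x. f x0 x \<partial>N)) / (t - x0)) \<circ> X) (i + n0) = (\<integral>x. s i x \<partial>N)" for i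
      using int[of "X (i+n0)"] int[of x0] n0[of "i+n0"] x0 unfolding s_def
      by (simp add: integral_diff)
    show "((\<lambda>t. ((\<integral>x. f t x \<partial>N) - (\<integral>x. f x0 x \<partial>N)) / (t - x0)) \<circ> X) \<longlonglongrightarrow> (\<integral>x. f' x0 x \<partial>N)"
      using lim unfolding eq[symmetric] by (rule LIMSEQ_offset)
  qed
  then show ?thesis using has_field_derivative_iff by blast
qed



definition phi :: "nat \<Rightarrow> real \<Rightarrow> real \<Rightarrow> real" where
  "phi k t p = p powr t * (ln p) ^ k"

lemma phi_deriv:
  assumes "0 \<le> p"
  shows "((\<lambda>s. phi k s p) has_real_derivative phi (Suc k) t p) (at t)"
proof (cases "p = 0")
  case True
  then show ?thesis by (simp add: phi_def)
next
  case False
  then have p: "p > 0" using assms by simp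
  have "((\<lambda>s. exp (s * ln p) * (ln p) ^ k) has_real_derivative exp (t * ln p) * ln p * (ln p) ^ k) (at t)"
    by (auto intro!: derivative_eq_intros)
  then show ?thesis using p by (simp add: phi_def powr_def mult_ac)
qed

lemma pow_le_exp:
  fixes z :: real
  assumes "0 \<le> z" "k \<le> 2"
  shows "z ^ k \<le> 4 * exp z"
proof -
  have "k = 0 \<or> k = 1 \<or> k = 2" using assms by auto
  moreover have "1 \<le> 4 * exp z" using exp_ge_add_one_self[of z] assms by linarith
  moreover have "z \<le> 4 * exp z"
    using exp_ge_add_one_self[of z] \<open>1 \<le> 4 * exp z\<close> by linarith
  moreover have "z ^ 2 \<le> 4 * exp z"
  proof -
    have "z / 2 \<le> exp (z / 2)" using exp_ge_add_one_self[of "z/2"] by linarith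
    then have "(z/2) ^ 2 \<le> exp (z/2) ^ 2" using assms by (intro power_mono) auto
    also have "exp (z/2) ^ 2 = exp z" by (simp add: exp_double[symmetric])
    finally show ?thesis by (simp add: power_divide)
  qed
  ultimately show ?thesis by auto
qed

lemma phi_bound:
  assumes p: "0 \<le> p" "p \<le> 1" and ab: "0 < b" "b < a" "a \<le> t" and k: "k \<le> 2"
  shows "\<bar>phi k t p\<bar> \<le> 4 / (a - b) ^ k * p powr b"
proof (cases "p = 0")
  case True
  then show ?thesis by (simp add: phi_def)
next
  case False
  then have p0: "p > 0" using p by simp
  define v where "v = - ln p"
  define c where "c = a - b"
  have v: "v \<ge> 0" using p p0 by (simp add: v_def)
  have c: "c > 0" using ab by (simp add: c_def)
  have "\<bar>phi k t p\<bar> = p powr t * v ^ k"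
    by (simp add: phi_def abs_mult power_abs v_def p0) (use p p0 in \<open>simp add: abs_if\<close>)
  also have "\<dots> \<le> p powr a * v ^ k"
    using p ab v by (intro mult_right_mono powr_mono') auto
  also have "p powr a = p powr b * exp (- (c * v))"
    using p0 by (simp add: c_def v_def powr_def exp_add[symmetric] algebra_simps)
  also have "p powr b * exp (- (c * v)) * v ^ k = p powr b * (exp (- (c * v)) * v ^ k)" by simp
  also have "\<dots> \<le> p powr b * (4 / c ^ k)"
  proof (rule mult_left_mono)
    have "(c * v) ^ k \<le> 4 * exp (c * v)" using c v k by (intro pow_le_exp) auto
    then have "v ^ k * c ^ k \<le> 4 * exp (c * v)" by (simp add: power_mult_distrib mult_ac)
    then have "v ^ k \<le> 4 * exp (c * v) / c ^ k" using c by (simp add: le_divide_eq)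
    then show "exp (- (c * v)) * v ^ k \<le> 4 / c ^ k"
      by (simp add: exp_minus field_simps)
  qed simp
  finally show ?thesis by (simp add: c_def mult_ac)
qed



lemma series_bound:
  fixes p :: "nat \<Rightarrow> real"
  assumes p0: "\<And>y. 0 \<le> p y" and p1: "\<And>y. p y \<le> 1" and sb: "summable (\<lambda>y. p y powr b)"
    and ab: "0 < b" "b < a" "a \<le> t" and k: "k \<le> 2"
  shows "summable (\<lambda>y. phi k t (p y))"
    and "integrable (count_space UNIV) (\<lambda>y. phi k t (p y))"
    and "\<bar>\<Sum>y. phi k t (p y)\<bar> \<le> 4 / (a - b) ^ k * (\<Sum>y. p y powr b)"
proof -
  have bnd: "\<bar>phi k t (p y)\<bar> \<le> 4 / (a - b) ^ k * p y powr b" for y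
    using phi_bound[OF p0 p1 ab k] .
  have sK: "summable (\<lambda>y. 4 / (a - b) ^ k * p y powr b)"
    using sb by (rule summable_mult)
  have sa: "summable (\<lambda>y. \<bar>phi k t (p y)\<bar>)"
    by (rule summable_comparison_test[OF _ sK]) (use bnd in \<open>intro exI[of _ 0] allI impI, simp\<close>)
  then show "summable (\<lambda>y. phi k t (p y))" by (rule summable_rabs_cancel)
  show "integrable (count_space UNIV) (\<lambda>y. phi k t (p y))"
    unfolding integrable_count_space_nat_iff real_norm_def by (rule sa)
  have "\<bar>\<Sum>y. phi k t (p y)\<bar> \<le> (\<Sum>y. \<bar>phi k t (p y)\<bar>)" using sa by (rule summable_rabs)
  also have "\<dots> \<le> (\<Sum>y. 4 / (a - b) ^ k * p y powr b)"
    by (rule suminf_le[OF bnd sa sK])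
  also have "\<dots> = 4 / (a - b) ^ k * (\<Sum>y. p y powr b)"
    using sb by (rule suminf_mult)
  finally show "\<bar>\<Sum>y. phi k t (p y)\<bar> \<le> 4 / (a - b) ^ k * (\<Sum>y. p y powr b)" .
qed

lemma series_deriv:
  fixes p :: "nat \<Rightarrow> real"
  assumes p0: "\<And>y. 0 \<le> p y" and p1: "\<And>y. p y \<le> 1" and sb: "summable (\<lambda>y. p y powr b)"
    and ab: "0 < b" "b < a" "a < t" and k: "k \<le> 1"
  shows "((\<lambda>s. \<Sum>y. phi k s (p y)) has_real_derivative (\<Sum>y. phi (Suc k) t (p y))) (at t)"
proof -
  have D: "((\<lambda>s. \<integral>y. phi k s (p y) \<partial>count_space UNIV) has_real_derivative
      (\<integral>y. phi (Suc k) t (p y) \<partial>count_space UNIV)) (at t)"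
  proof (rule DI[where a=a and g="\<lambda>y. 4 / (a - b) ^ Suc k * p y powr b"])
    show "a < t" by fact
    show "integrable (count_space UNIV) (\<lambda>y. phi k s (p y))" if "a < s" for s
      using series_bound(2)[OF p0 p1 sb ab(1,2), of s k] that k by simp
    show "(\<lambda>y. phi (Suc k) t (p y)) \<in> borel_measurable (count_space UNIV)" by simp
    show "AE x in count_space UNIV. \<forall>s>a. ((\<lambda>s. phi k s (p x)) has_real_derivative phi (Suc k) s (p x)) (at s)"
      by (intro AE_I2 allI impI phi_deriv p0)
    show "AE x in count_space UNIV. \<forall>s>a. \<bar>phi (Suc k) s (p x)\<bar> \<le> 4 / (a - b) ^ Suc k * p x powr b"
    proof (intro AE_I2 allI impI)
      fix x s assume "a < s"
      then show "\<bar>phi (Suc k) s (p x)\<bar> \<le> 4 / (a - b) ^ Suc k * p x powr b"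
        using phi_bound[OF p0 p1 ab(1,2), of s "Suc k" x] k by linarith
    qed
    show "integrable (count_space UNIV) (\<lambda>y. 4 / (a - b) ^ Suc k * p y powr b)"
      using sb p0 by (simp add: integrable_count_space_nat_iff)
  qed
  have E: "(\<integral>y. phi (Suc k) t (p y) \<partial>count_space UNIV) = (\<Sum>y. phi (Suc k) t (p y))"
    using series_bound(2)[OF p0 p1 sb ab(1,2), of t "Suc k"] ab k by (simp add: integral_count_space_nat)
  from D E have D': "((\<lambda>s. \<integral>y. phi k s (p y) \<partial>count_space UNIV) has_real_derivative
      (\<Sum>y. phi (Suc k) t (p y))) (at t)" by simp
  from D' show ?thesis
  proof (rule has_field_derivative_transform_within_open[where S="{a<..}"])
    show "open {a<..}" by simp
    show "t \<in> {a<..}" using ab by simp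
    show "(\<integral>y. phi k s (p y) \<partial>count_space UNIV) = (\<Sum>y. phi k s (p y))" if "s \<in> {a<..}" for s
      using series_bound(2)[OF p0 p1 sb ab(1,2), of s k] that k by (simp add: integral_count_space_nat)
  qed
qed



lemma renyi_generic:
  fixes G0 G1 G2 :: "real \<Rightarrow> real"
  assumes d0: "\<And>t. t > b \<Longrightarrow> (G0 has_real_derivative G1 t) (at t)"
    and d1: "\<And>t. t > b \<Longrightarrow> (G1 has_real_derivative G2 t) (at t)"
    and pos: "\<And>t. t > b \<Longrightarrow> G0 t > 0" and one: "G0 1 = 1" and b1: "b < 1"
  shows "(\<lambda>t. 1/(1-t) * ln (G0 t)) C1_differentiable_on ({b<..<1} \<union> {1<..})"
    and "((\<lambda>t. 1/(1-t) * ln (G0 t)) \<longlongrightarrow> - G1 1) (at 1)"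
proof -
  have dl: "((\<lambda>t. ln (G0 t)) has_real_derivative 1 / G0 t * G1 t) (at t)" if "t > b" for t
    by (rule DERIV_chain2[OF DERIV_ln_divide[OF pos[OF that]] d0[OF that]])
  define S where "S = {b<..<1} \<union> {1<..}"
  have S: "t > b" "t \<noteq> 1" if "t \<in> S" for t using that b1 by (auto simp: S_def)
  define D where "D t = 1/(1-t)^2 * ln (G0 t) + 1 / G0 t * G1 t * (1/(1-t))" for t
  have dD: "((\<lambda>t. 1/(1-t) * ln (G0 t)) has_real_derivative D t) (at t)" if "t \<in> S" for t
  proof -
    have a: "((\<lambda>t. 1/(1-t)) has_real_derivative 1/(1-t)^2) (at t)"
      using S[OF that] by (auto intro!: derivative_eq_intros simp: power2_eq_square field_simps)
    show ?thesis unfolding D_def by (rule DERIV_mult[OF a dl[OF S(1)[OF that]]])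
  qed
  have c0: "continuous_on S G0"
    by (rule continuous_at_imp_continuous_on) (use d0 S in \<open>blast intro: DERIV_isCont\<close>)
  have c1: "continuous_on S G1"
    by (rule continuous_at_imp_continuous_on) (use d1 S in \<open>blast intro: DERIV_isCont\<close>)
  have cD: "continuous_on S D"
    unfolding D_def
    by (intro continuous_intros c0 c1) (use S pos in \<open>fastforce+\<close>)
  show "(\<lambda>t. 1/(1-t) * ln (G0 t)) C1_differentiable_on ({b<..<1} \<union> {1<..})"
    unfolding C1_differentiable_on_def S_def[symmetric]
    using dD cD by (auto simp: has_real_derivative_iff_has_vector_derivative)
  have "((\<lambda>y. (ln (G0 y) - ln (G0 1)) / (y - 1)) \<longlongrightarrow> 1 / G0 1 * G1 1) (at 1)"
    using has_field_derivative_iff[THEN iffD1, OF dl[OF b1]] by simp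
  then have "((\<lambda>y. - ((ln (G0 y) - ln (G0 1)) / (y - 1))) \<longlongrightarrow> - G1 1) (at 1)"
    using one by (auto intro: tendsto_minus)
  moreover have "- ((ln (G0 y) - ln (G0 1)) / (y - 1)) = 1/(1-y) * ln (G0 y)" for y
  proof (cases "y = 1")
    case False
    then have "y - 1 \<noteq> 0" "1 - y \<noteq> 0" by auto
    then show ?thesis using one by (simp add: field_simps)
  qed simp
  ultimately show "((\<lambda>t. 1/(1-t) * ln (G0 t)) \<longlongrightarrow> - G1 1) (at 1)" by simp
qed



lemma le_one_of_sums:
  fixes q :: "nat \<Rightarrow> real"
  assumes "\<And>y. 0 \<le> q y" "q sums 1"
  shows "q y \<le> 1"
proof -
  have "sum q {y} \<le> suminf q"
    using assms by (intro sum_le_suminf) (auto simp: sums_iff)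
  then show ?thesis using assms by (simp add: sums_iff)
qed

lemma pos_of_sums:
  fixes q :: "nat \<Rightarrow> real"
  assumes "\<And>y. 0 \<le> q y" "q sums 1" and s: "summable (\<lambda>y. phi 0 t (q y))"
  shows "(\<Sum>y. phi 0 t (q y)) > 0"
proof -
  obtain y where y: "q y \<noteq> 0"
  proof (rule ccontr)
    assume "\<not> thesis"
    then have "q = (\<lambda>_. 0)" using that by auto
    then show False using assms(2) sums_unique by fastforce
  qed
  show ?thesis
    by (rule suminf_pos2[OF s, of y]) (use y in \<open>auto simp: phi_def\<close>)
qed

theorem lemma11:
  fixes M :: "'a measure" and P :: "'a \<Rightarrow> nat \<Rightarrow> real"
    and U :: "nat \<Rightarrow> real" and \<alpha>min :: real
  assumes "prob_space M"
    and P_nonneg: "\<And>x y. x \<in> space M \<Longrightarrow> P x y \<ge> 0"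
    and P_sums: "\<And>x. x \<in> space M \<Longrightarrow> (\<lambda>y. P x y) sums 1"
    and P_meas: "\<And>y. (\<lambda>x. P x y) \<in> borel_measurable M"
    and U_nonneg: "\<And>y. U y \<ge> 0"
    and U_sums: "U sums 1"
    and amin: "0 < \<alpha>min" "\<alpha>min < 1"
    and U_tr: "summable (\<lambda>y. U y powr \<alpha>min)"
    and P_tr: "AE x in M. summable (\<lambda>y. P x y powr \<alpha>min)"
    and P_int: "integrable M (\<lambda>x. \<Sum>y. P x y powr \<alpha>min)"
  shows "Renyi_U U C1_differentiable_on ({\<alpha>min<..<1} \<union> {1<..})
    \<and> Renyi_cond M P C1_differentiable_on ({\<alpha>min<..<1} \<union> {1<..})
    \<and> (Renyi_U U \<longlongrightarrow> Shannon_U U) (at 1)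
    \<and> (Renyi_cond M P \<longlongrightarrow> Shannon_cond M P) (at 1)"
proof -
  interpret prob_space M by fact
  note [measurable] = P_meas
  define b where "b = \<alpha>min"
  have b: "0 < b" "b < 1" using amin by (auto simp: b_def)
  have U1: "U y \<le> 1" for y by (rule le_one_of_sums[OF U_nonneg U_sums])
  have P1: "P x y \<le> 1" if "x \<in> space M" for x y
    by (rule le_one_of_sums[of "P x", OF P_nonneg[OF that] P_sums[OF that]])
  have Ub: "summable (\<lambda>y. U y powr b)" using U_tr by (simp add: b_def)
  define HU where "HU k t = (\<Sum>y. phi k t (U y))" for k t
  have dU: "(HU k has_real_derivative HU (Suc k) t) (at t)" if "t > b" "k \<le> 1" for k t
    unfolding HU_def
    by (rule series_deriv[OF U_nonneg U1 Ub b(1), of "(b+t)/2"]) (use that in auto)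
  have posU: "HU 0 t > 0" if "t > b" for t
    unfolding HU_def
    by (rule pos_of_sums[OF U_nonneg U_sums series_bound(1)[OF U_nonneg U1 Ub b(1), of "(b+t)/2"]])
       (use that in auto)
  have oneU: "HU 0 1 = 1"
    using U_sums U_nonneg by (simp add: HU_def phi_def sums_iff)
  have RU: "Renyi_U U = (\<lambda>t. 1/(1-t) * ln (HU 0 t))"
    by (simp add: fun_eq_iff Renyi_U_def HU_def phi_def)
  have SU: "Shannon_U U = - HU 1 1"
    using U_nonneg by (simp add: Shannon_U_def HU_def phi_def)
  have U_res: "Renyi_U U C1_differentiable_on ({\<alpha>min<..<1} \<union> {1<..})"
     "(Renyi_U U \<longlongrightarrow> Shannon_U U) (at 1)"
  proof -
    have d0: "\<And>t. t > b \<Longrightarrow> (HU 0 has_real_derivative HU 1 t) (at t)" using dU by simp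
    have d1: "\<And>t. t > b \<Longrightarrow> (HU 1 has_real_derivative HU 2 t) (at t)" using dU[of _ 1] by (simp add: numeral_2_eq_2)
    show "Renyi_U U C1_differentiable_on ({\<alpha>min<..<1} \<union> {1<..})"
     "(Renyi_U U \<longlongrightarrow> Shannon_U U) (at 1)"
      unfolding RU SU b_def[symmetric] using renyi_generic[OF d0 d1 posU oneU b(2)] by auto
  qed
  have Pb: "AE x in M. x \<in> space M \<and> summable (\<lambda>y. P x y powr b)"
    using P_tr AE_space unfolding b_def by eventually_elim auto
  define F where "F k t x = (\<Sum>y. phi k t (P x y))" for k t x
  define G where "G k t = (\<integral>x. F k t x \<partial>M)" for k t
  define S where "S = (\<lambda>x. \<Sum>y. P x y powr b)"
  have S_int: "integrable M S" using P_int unfolding S_def b_def by simp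
  have F_meas: "F k t \<in> borel_measurable M" for k t
    unfolding F_def phi_def by measurable
  have F_bnd: "AE x in M. \<forall>t. a \<le> t \<longrightarrow> \<bar>F k t x\<bar> \<le> 4 / (a - b) ^ k * S x"
    if "b < a" "k \<le> 2" for a k
    using Pb
  proof eventually_elim
    case (elim x)
    show ?case
      using series_bound(3)[OF P_nonneg[OF elim[THEN conjunct1]] P1[OF elim[THEN conjunct1]]
          elim[THEN conjunct2] b(1) that(1)] that(2) unfolding F_def S_def by auto
  qed
  have S_nonneg: "AE x in M. S x \<ge> 0"
    using Pb by eventually_elim (auto simp: S_def intro!: suminf_nonneg)
  have F_int: "integrable M (F k t)" if "b < a" "a \<le> t" "k \<le> 2" for a k t
  proof (rule Bochner_Integration.integrable_bound[OF integrable_mult_right[OF S_int, of "4 / (a - b) ^ k"] F_meas])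
    show "AE x in M. norm (F k t x) \<le> norm (4 / (a - b) ^ k * S x)"
      using F_bnd[OF that(1,3)] S_nonneg
    proof eventually_elim
      case (elim x)
      then have "\<bar>F k t x\<bar> \<le> 4 / (a - b) ^ k * S x" using that by auto
      also have "\<dots> \<le> \<bar>4 / (a - b) ^ k * S x\<bar>" by (rule abs_ge_self)
      finally show ?case by simp
    qed
  qed
  have dG: "(G k has_real_derivative G (Suc k) t) (at t)" if "t > b" "k \<le> 1" for k t
    unfolding G_def
  proof (rule DI[where a="(b+t)/2" and g="\<lambda>x. 4 / ((b+t)/2 - b) ^ Suc k * S x"])
    show "(b + t) / 2 < t" using that by simp
    show "integrable M (F k s)" if "(b + t) / 2 < s" for s
      by (rule F_int[of "(b+t)/2"]) (use that \<open>t > b\<close> \<open>k \<le> 1\<close> in auto)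
    show "F (Suc k) t \<in> borel_measurable M" by (rule F_meas)
    show "AE x in M. \<forall>s>(b + t) / 2. ((\<lambda>s. F k s x) has_real_derivative F (Suc k) s x) (at s)"
      using Pb
    proof eventually_elim
      case (elim x)
      show ?case unfolding F_def
        by (intro allI impI series_deriv[OF P_nonneg[OF elim[THEN conjunct1]] P1[OF elim[THEN conjunct1]]
          elim[THEN conjunct2] b(1), of "(b+t)/2"]) (use that in auto)
    qed
    show "AE x in M. \<forall>s>(b + t) / 2. \<bar>F (Suc k) s x\<bar> \<le> 4 / ((b + t) / 2 - b) ^ Suc k * S x"
    proof -
      have "AE x in M. \<forall>s. (b+t)/2 \<le> s \<longrightarrow> \<bar>F (Suc k) s x\<bar> \<le> 4 / ((b + t) / 2 - b) ^ Suc k * S x"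
        by (rule F_bnd) (use that in auto)
      then show ?thesis by eventually_elim auto
    qed
    show "integrable M (\<lambda>x. 4 / ((b + t) / 2 - b) ^ Suc k * S x)"
      using S_int by simp
  qed
  have posG: "G 0 t > 0" if "t > b" for t
  proof -
    have Fpos: "AE x in M. F 0 t x > 0"
      using Pb
    proof eventually_elim
      case (elim x)
      show ?case unfolding F_def
        by (rule pos_of_sums[OF P_nonneg[OF elim[THEN conjunct1]] P_sums[OF elim[THEN conjunct1]]
          series_bound(1)[OF P_nonneg[OF elim[THEN conjunct1]] P1[OF elim[THEN conjunct1]]
          elim[THEN conjunct2] b(1), of "(b+t)/2"]]) (use that in auto)
    qed
    have int: "integrable M (F 0 t)" by (rule F_int[of "(b+t)/2"]) (use that in auto)
    have "G 0 t \<ge> 0" unfolding G_def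
      by (rule integral_nonneg_AE) (use Fpos in \<open>eventually_elim, simp\<close>)
    moreover have "G 0 t \<noteq> 0"
    proof
      assume "G 0 t = 0"
      then have "AE x in M. F 0 t x = 0"
      proof -
        have "AE x in M. 0 \<le> F 0 t x" using Fpos by eventually_elim simp
        then show ?thesis using \<open>G 0 t = 0\<close> integral_nonneg_eq_0_iff_AE[OF int] unfolding G_def by simp
      qed
      with Fpos have "AE x in M. False" by eventually_elim auto
      then show False by (simp add: AE_False)
    qed
    ultimately show ?thesis by simp
  qed
  have oneG: "G 0 1 = 1"
  proof -
    have "G 0 1 = (\<integral>x. 1 \<partial>M)" unfolding G_def F_def
      by (rule Bochner_Integration.integral_cong[OF refl]) (use P_sums P_nonneg in \<open>auto simp: phi_def sums_iff\<close>)
    then show ?thesis by (simp add: prob_space)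
  qed
  have RC: "Renyi_cond M P = (\<lambda>t. 1/(1-t) * ln (G 0 t))"
    by (simp add: fun_eq_iff Renyi_cond_def G_def F_def phi_def)
  have SC: "Shannon_cond M P = - G 1 1"
  proof -
    have "G 1 1 = (\<integral>x. (\<Sum>y. P x y * ln (P x y)) \<partial>M)" unfolding G_def F_def
      by (rule Bochner_Integration.integral_cong[OF refl]) (use P_nonneg in \<open>auto simp: phi_def\<close>)
    then show ?thesis by (simp add: Shannon_cond_def)
  qed
  have C_res: "Renyi_cond M P C1_differentiable_on ({\<alpha>min<..<1} \<union> {1<..})"
     "(Renyi_cond M P \<longlongrightarrow> Shannon_cond M P) (at 1)"
  proof -
    have d0: "\<And>t. t > b \<Longrightarrow> (G 0 has_real_derivative G 1 t) (at t)" using dG by simp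
    have d1: "\<And>t. t > b \<Longrightarrow> (G 1 has_real_derivative G 2 t) (at t)" using dG[of _ 1] by (simp add: numeral_2_eq_2)
    show "Renyi_cond M P C1_differentiable_on ({\<alpha>min<..<1} \<union> {1<..})"
     "(Renyi_cond M P \<longlongrightarrow> Shannon_cond M P) (at 1)"
      unfolding RC SC b_def[symmetric] using renyi_generic[OF d0 d1 posG oneG b(2)] by auto
  qed
  show ?thesis using U_res C_res by blast
qed


end
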